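(* Let $\ell\ge1$ and $d\ge2$. Assign to every ordered pair of distinct hosts $(\mathbf{h}^s,\mathbf{h}^d)$ of $\mathcal{B}(\ell,d)$ its descending dipath, and give it the wavelength (color) $w_1\cdots w_\ell\in\mathbb{Z}_d^\ell$ defined by $w_i=(h^d_i-h^s_i)\bmod d$. Then any two dipaths sharing an arc receive different wavelengths, and at most $d^\ell-1$ wavelengths are used. Consequently, $$d^\ell-d^{\ell-1}\le\omega(\mathcal{B}(\ell,d))\le d^\ell-1.$$
   Context: The BCube $\mathcal{B}(\ell,d)$ ($\ell,d$ positive integers) is the symmetric digraph defined as follows, with $\mathbb{Z}_d=\{0,1,\dots,d-1\}$. - Hosts: all vectors $\mathbf{h}=h_1\cdots h_\ell\in\mathbb{Z}_d^{\ell}$. - Switches: for each layer $k\in\{1,\dots,\ell\}$, one switch $\mathbf{s}^k$ for each vector $s^k_1\cdots s^k_{\ell-1}\in\mathbb{Z}_d^{\ell-1}$. - Links: host $\mathbf{h}$ and layer-$k$ switch $\mathbf{s}^k$ are joined if and only if $s^k_1\cdots s^k_{\ell-1}=h_1\cdots h_{k-1}h_{k+1}\cdots h_\ell$. Each such link gives an uplink arc (host $\to$ switch) and a downlink arc (switch $\to$ host) at layer $k$. Descending dipath: let $\mathbf{h}^s\neq\mathbf{h}^d$ be hosts, and let $i_1>\dots>i_m$ be the coordinates in which they differ. Define $\mathbf{h}^0=\mathbf{h}^s$, and let $\mathbf{h}^j$ be $\mathbf{h}^{j-1}$ with its $i_j$-th coordinate replaced by $h^d_{i_j}$. The descending dipath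 goes, for each $j=1,\dots,m$, from $\mathbf{h}^{j-1}$ through the unique layer-$i_j$ switch adjacent to both $\mathbf{h}^{j-1}$ and $\mathbf{h}^j$, to $\mathbf{h}^j$. A host-to-host routing $R$ assigns to every ordered pair of distinct hosts a directed path between them. $\omega(\mathcal{B}(\ell,d),R)$ is the minimum number of colors needed to color the paths of $R$ so that any two paths sharing an arc get different colors. The optical index is $\omega(\mathcal{B}(\ell,d))=\min_R\omega(\mathcal{B}(\ell,d),R)$, the minimum taken over all host-to-host routings $R$. *)

theory Defs
  imports Main
begin

(* Hosts are vectors h_1...h_l over Z_d, represented
   as lists of length l with entries < d (coordinate i is list index i-1).
   A layer-k switch (k in {1..l}) is labelled by a vector of length l-1. *)
datatype vertex = Host "nat list" | Switch nat "nat list"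

definition remove_nth :: "nat \<Rightarrow> 'a list \<Rightarrow> 'a list" where
  "remove_nth i xs = take i xs @ drop (Suc i) xs"

definition host_set :: "nat \<Rightarrow> nat \<Rightarrow> nat list set" where
  "host_set l d = {h. length h = l \<and> (\<forall>x\<in>set h. x < d)}"

definition host_pairs :: "nat \<Rightarrow> nat \<Rightarrow> (nat list \<times> nat list) set" where
  "host_pairs l d = {(a, b). a \<in> host_set l d \<and> b \<in> host_set l d \<and> a \<noteq> b}"

definition is_arc :: "nat \<Rightarrow> nat \<Rightarrow> vertex \<times> vertex \<Rightarrow> bool" where
  "is_arc l d e \<longleftrightarrow>
     (\<exists>h k. h \<in> host_set l d \<and> 1 \<le> k \<and> k \<le> l \<and>
        (e = (Host h, Switch k (remove_nth (k - 1) h)) \<or>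
         e = (Switch k (remove_nth (k - 1) h), Host h)))"

definition arcs_of :: "vertex list \<Rightarrow> (vertex \<times> vertex) set" where
  "arcs_of p = set (zip p (tl p))"

definition is_dipath :: "nat \<Rightarrow> nat \<Rightarrow> vertex list \<Rightarrow> vertex \<Rightarrow> vertex \<Rightarrow> bool" where
  "is_dipath l d p u v \<longleftrightarrow>
     p \<noteq> [] \<and> hd p = u \<and> last p = v \<and> distinct p \<and> (\<forall>e\<in>arcs_of p. is_arc l d e)"

definition is_routing :: "nat \<Rightarrow> nat \<Rightarrow> (nat list \<times> nat list \<Rightarrow> vertex list) \<Rightarrow> bool" where
  "is_routing l d R \<longleftrightarrow> (\<forall>(a, b)\<in>host_pairs l d. is_dipath l d (R (a, b)) (Host a) (Host b))"

definition proper_coloring ::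
  "nat \<Rightarrow> nat \<Rightarrow> (nat list \<times> nat list \<Rightarrow> vertex list) \<Rightarrow> (nat list \<times> nat list \<Rightarrow> 'c) \<Rightarrow> bool" where
  "proper_coloring l d R c \<longleftrightarrow>
     (\<forall>p\<in>host_pairs l d. \<forall>q\<in>host_pairs l d.
        p \<noteq> q \<and> arcs_of (R p) \<inter> arcs_of (R q) \<noteq> {} \<longrightarrow> c p \<noteq> c q)"

definition omega_R :: "nat \<Rightarrow> nat \<Rightarrow> (nat list \<times> nat list \<Rightarrow> vertex list) \<Rightarrow> nat" where
  "omega_R l d R = (LEAST k. \<exists>c :: nat list \<times> nat list \<Rightarrow> nat.
       proper_coloring l d R c \<and> card (c ` host_pairs l d) = k)"

definition optical_index :: "nat \<Rightarrow> nat \<Rightarrow> nat" where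
  "optical_index l d = (LEAST k. \<exists>R. is_routing l d R \<and> omega_R l d R = k)"

fun desc_walk :: "nat list \<Rightarrow> nat list \<Rightarrow> nat list \<Rightarrow> vertex list" where
  "desc_walk h t [] = [Host h]"
| "desc_walk h t (i # is) =
     Host h # Switch (Suc i) (remove_nth i h) # desc_walk (h[i := t ! i]) t is"

definition desc_path :: "nat \<Rightarrow> nat list \<Rightarrow> nat list \<Rightarrow> vertex list" where
  "desc_path l hs ht = desc_walk hs ht (rev (filter (\<lambda>i. hs ! i \<noteq> ht ! i) [0..<l]))"

definition wavelength :: "nat \<Rightarrow> nat list \<Rightarrow> nat list \<Rightarrow> nat list" where
  "wavelength d hs ht = map (\<lambda>(a, b). nat ((int b - int a) mod int d)) (zip hs ht)"

end

theory Submission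
  imports Defs "HOL-Library.Countable"
begin

lemma arcs_of_Cons2: "arcs_of (a # b # rest) = insert (a, b) (arcs_of (b # rest))"
  by (simp add: arcs_of_def)

lemma arcs_of_single[simp]: "arcs_of [a] = {}" by (simp add: arcs_of_def)

lemma desc_walk_hd: "\<exists>rest. desc_walk h t is = Host h # rest"
  by (cases "is") auto

lemma desc_walk_arcs_Cons: "arcs_of (desc_walk h t (i # is)) =
   {(Host h, Switch (Suc i) (remove_nth i h)), (Switch (Suc i) (remove_nth i h), Host (h[i := t!i]))}
    \<union> arcs_of (desc_walk (h[i := t!i]) t is)"
proof -
  obtain rest where "desc_walk (h[i := t!i]) t is = Host (h[i := t!i]) # rest"
    using desc_walk_hd by blast
  then show ?thesis by (simp add: arcs_of_Cons2)
qed

lemma remove_nth_update[simp]: "remove_nth i (h[i := x]) = remove_nth i h"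
  by (simp add: remove_nth_def)

lemma desc_walk_ne[simp]: "desc_walk h t is \<noteq> []"
  by (cases "is") auto

lemma desc_walk_hd'[simp]: "hd (desc_walk h t is) = Host h"
  by (cases "is") auto

lemma desc_walk_last: "last (desc_walk h t is) = Host (foldl (\<lambda>h i. h[i := t!i]) h is)"
  by (induction "is" arbitrary: h) auto

lemma foldl_upd_length[simp]: "length (foldl (\<lambda>h i. h[i := t!i]) h is) = length h"
  by (induction "is" arbitrary: h) auto

lemma foldl_upd_nth: "j < length h \<Longrightarrow>
  foldl (\<lambda>h i. h[i := t!i]) h is ! j = (if j \<in> set is then t!j else h!j)"
  by (induction "is" arbitrary: h) (auto simp: nth_list_update)

lemma desc_walk_host: "Host g \<in> set (desc_walk h t is) \<Longrightarrow> j \<notin> set is \<Longrightarrow> g!j = h!j"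
  by (induction "is" arbitrary: h) (auto simp: nth_list_update)

lemma desc_walk_switch: "Switch k lab \<in> set (desc_walk h t is) \<Longrightarrow> \<exists>i\<in>set is. k = Suc i"
  by (induction "is" arbitrary: h) auto

lemma desc_walk_distinct:
  "distinct is \<Longrightarrow> (\<forall>i\<in>set is. i < length h \<and> h!i \<noteq> t!i) \<Longrightarrow> distinct (desc_walk h t is)"
proof (induction "is" arbitrary: h)
  case Nil then show ?case by simp
next
  case (Cons i "is")
  let ?h' = "h[i := t!i]"
  have "distinct (desc_walk ?h' t is)"
    using Cons by (intro Cons.IH) (auto simp: nth_list_update)
  moreover have "Host h \<notin> set (desc_walk ?h' t is)"
  proof
    assume "Host h \<in> set (desc_walk ?h' t is)"
    then have "h!i = ?h'!i" using desc_walk_host Cons.prems(1) by fastforce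
    then show False using Cons.prems by auto
  qed
  moreover have "Switch (Suc i) (remove_nth i h) \<notin> set (desc_walk ?h' t is)"
    using desc_walk_switch Cons.prems(1) by fastforce
  ultimately show ?case by simp
qed

lemma host_set_update: "h \<in> host_set l d \<Longrightarrow> x < d \<Longrightarrow> h[i := x] \<in> host_set l d"
  unfolding host_set_def using set_update_subset_insert by fastforce

lemma desc_walk_arcs_valid:
  "h \<in> host_set l d \<Longrightarrow> t \<in> host_set l d \<Longrightarrow> set is \<subseteq> {..<l}
   \<Longrightarrow> e \<in> arcs_of (desc_walk h t is) \<Longrightarrow> is_arc l d e"
proof (induction "is" arbitrary: h)
  case Nil then show ?case by simp
next
  case (Cons i "is")
  let ?h' = "h[i := t!i]"
  have il: "i < l" using Cons.prems by auto
  have td: "t ! i < d" using Cons.prems(2) il unfolding host_set_def by auto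
  have h': "?h' \<in> host_set l d" using host_set_update[OF Cons.prems(1) td] .
  have a1: "is_arc l d (Host h, Switch (Suc i) (remove_nth i h))"
    unfolding is_arc_def using Cons.prems(1) il by (intro exI[of _ h] exI[of _ "Suc i"]) auto
  have a2: "is_arc l d (Switch (Suc i) (remove_nth i h), Host ?h')"
    unfolding is_arc_def using h' il by (intro exI[of _ ?h'] exI[of _ "Suc i"]) auto
  show ?case using Cons.prems(4) unfolding desc_walk_arcs_Cons
    using a1 a2 Cons.IH[OF h' Cons.prems(2)] Cons.prems(3) by auto
qed

lemma routing_ok:
  assumes "(a, b) \<in> host_pairs l d"
  shows "is_dipath l d (desc_path l a b) (Host a) (Host b)"
proof -
  let ?is = "rev (filter (\<lambda>i. a ! i \<noteq> b ! i) [0..<l])"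
  have A: "a \<in> host_set l d" and B: "b \<in> host_set l d" and ab: "a \<noteq> b"
    using assms unfolding host_pairs_def by auto
  have la: "length a = l" and lb: "length b = l" using A B unfolding host_set_def by auto
  have "foldl (\<lambda>h i. h[i := b!i]) a ?is = b"
    by (rule nth_equalityI) (auto simp: la lb foldl_upd_nth)
  then have last: "last (desc_path l a b) = Host b"
    unfolding desc_path_def desc_walk_last by simp
  have dist: "distinct (desc_path l a b)"
    unfolding desc_path_def by (rule desc_walk_distinct) (auto simp: la)
  have arcs: "\<forall>e\<in>arcs_of (desc_path l a b). is_arc l d e"
    unfolding desc_path_def using desc_walk_arcs_valid[OF A B, of ?is] by auto
  show ?thesis unfolding is_dipath_def using last dist arcs
    by (simp add: desc_path_def)
qed

lemma arc_split:
  assumes "e \<in> arcs_of (desc_walk h b is)"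
  "sorted_wrt (>) is" "length h = l" "length b = l" "set is \<subseteq> {..<l}"
  "\<forall>j<l. j \<notin> set is \<longrightarrow> h!j = b!j"
  "\<forall>k\<in>set is. \<forall>j<l. j \<le> k \<longrightarrow> h!j = a!j"
  shows "\<exists>g m i. (\<forall>j<l. j < m \<longrightarrow> g!j = a!j) \<and> (\<forall>j<l. m \<le> j \<longrightarrow> g!j = b!j) \<and>
     ((e = (Host g, Switch (Suc i) (remove_nth i g)) \<and> m = Suc i) \<or>
      (e = (Switch (Suc i) (remove_nth i g), Host g) \<and> m = i))"
  using assms
proof (induction "is" arbitrary: h)
  case Nil then show ?case by simp
next
  case (Cons i "is")
  let ?h' = "h[i := b!i]"
  have il: "i < l" using Cons.prems by auto
  have lt: "\<forall>k\<in>set is. k < i" using Cons.prems(2) by auto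
  consider (up) "e = (Host h, Switch (Suc i) (remove_nth i h))"
    | (down) "e = (Switch (Suc i) (remove_nth i ?h'), Host ?h')"
    | (rest) "e \<in> arcs_of (desc_walk ?h' b is)"
    using Cons.prems(1) unfolding desc_walk_arcs_Cons by auto
  then show ?case
  proof cases
    case up
    have "\<forall>j<l. j < Suc i \<longrightarrow> h!j = a!j" using Cons.prems(7) by auto
    moreover have "\<forall>j<l. Suc i \<le> j \<longrightarrow> h!j = b!j" using Cons.prems(6) lt by fastforce
    ultimately show ?thesis using up by blast
  next
    case down
    have d1: "\<forall>j<l. j < i \<longrightarrow> ?h'!j = a!j" using Cons.prems(7) by auto
    have nis: "\<forall>j. i < j \<longrightarrow> j \<notin> set is" using lt by auto
    have d2: "\<forall>j<l. i \<le> j \<longrightarrow> ?h'!j = b!j"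
    proof (intro allI impI)
      fix j assume j: "j < l" "i \<le> j"
      show "?h'!j = b!j"
      proof (cases "j = i")
        case True then show ?thesis using j Cons.prems(3) by simp
      next
        case False
        then have "j \<notin> set (i # is)" using nis j by auto
        then show ?thesis using Cons.prems(6) j False by simp
      qed
    qed
    show ?thesis using d1 d2 down by blast
  next
    case rest
    show ?thesis
    proof (rule Cons.IH[OF rest])
      show "sorted_wrt (>) is" using Cons.prems(2) by simp
      show "length ?h' = l" using Cons.prems(3) by simp
      show "length b = l" by fact
      show "set is \<subseteq> {..<l}" using Cons.prems(5) by simp
      show "\<forall>j<l. j \<notin> set is \<longrightarrow> ?h'!j = b!j"
      proof (intro allI impI)
        fix j assume j: "j < l" "j \<notin> set is"
        show "?h'!j = b!j"
        proof (cases "j = i")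
          case True then show ?thesis using j Cons.prems(3) by simp
        next
          case False then show ?thesis using Cons.prems(6) j by simp
        qed
      qed
      show "\<forall>k\<in>set is. \<forall>j<l. j \<le> k \<longrightarrow> ?h'!j = a!j" using Cons.prems(7) lt
        by (auto simp: nth_list_update)
    qed
  qed
qed


lemma int_mod_eq:
  fixes x y z d :: int
  assumes "0 \<le> x" "x < d" "0 \<le> y" "y < d" "(z - x) mod d = (z - y) mod d"
  shows "x = y"
proof -
  have "x mod d = y mod d" using assms(5) by algebra
  then show ?thesis using assms by simp
qed

lemma int_mod_eq2:
  fixes x y z d :: int
  assumes "0 \<le> x" "x < d" "0 \<le> y" "y < d" "(x - z) mod d = (y - z) mod d"
  shows "x = y"
proof -
  have "x mod d = y mod d" using assms(5) by (simp add: mod_eq_dvd_iff)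
  then show ?thesis using assms by simp
qed


lemma wavelength_nth:
  "j < length a \<Longrightarrow> length a = length b \<Longrightarrow>
   wavelength d a b ! j = nat ((int (b!j) - int (a!j)) mod int d)"
  by (simp add: wavelength_def)

lemma wl_int_eq:
  assumes "j < l" "a \<in> host_set l d" "b \<in> host_set l d" "a' \<in> host_set l d" "b' \<in> host_set l d"
    "d > 0" "wavelength d a b = wavelength d a' b'"
  shows "(int (b!j) - int (a!j)) mod int d = (int (b'!j) - int (a'!j)) mod int d"
proof -
  have "wavelength d a b ! j = wavelength d a' b' ! j" using assms(7) by simp
  then have "nat ((int (b!j) - int (a!j)) mod int d) = nat ((int (b'!j) - int (a'!j)) mod int d)"
    using assms(1-5) by (simp add: wavelength_nth host_set_def)
  then show ?thesis using assms(6) by (simp add: eq_nat_nat_iff)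
qed

lemma host_entry: "a \<in> host_set l d \<Longrightarrow> j < l \<Longrightarrow> a!j < d"
  unfolding host_set_def by auto

lemma det:
  assumes A: "a \<in> host_set l d" "b \<in> host_set l d" "a' \<in> host_set l d" "b' \<in> host_set l d"
    and d: "d > 0" and w: "wavelength d a b = wavelength d a' b'"
    and s1: "\<forall>j<l. j < m \<longrightarrow> g!j = a!j" "\<forall>j<l. m \<le> j \<longrightarrow> g!j = b!j"
    and s2: "\<forall>j<l. j < m \<longrightarrow> g!j = a'!j" "\<forall>j<l. m \<le> j \<longrightarrow> g!j = b'!j"
  shows "a = a' \<and> b = b'"
proof -
  have L: "length a = l" "length b = l" "length a' = l" "length b' = l"
    using A unfolding host_set_def by auto
  have eq: "a!j = a'!j \<and> b!j = b'!j" if j: "j < l" for j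
  proof -
    have m: "(int (b!j) - int (a!j)) mod int d = (int (b'!j) - int (a'!j)) mod int d"
      using wl_int_eq[OF j A d w] .
    have r: "a!j < d" "b!j < d" "a'!j < d" "b'!j < d" using A j host_entry by auto
    show ?thesis
    proof (cases "j < m")
      case True
      then have aa: "a!j = a'!j" using s1 s2 j by auto
      then have "int (b!j) = int (b'!j)"
        using int_mod_eq2[of "int (b!j)" "int d" "int (b'!j)" "int (a!j)"] m r by simp
      then show ?thesis using aa by simp
    next
      case False
      then have bb: "b!j = b'!j" using s1 s2 j by auto
      then have "int (a!j) = int (a'!j)"
        using int_mod_eq[of "int (a!j)" "int d" "int (a'!j)" "int (b!j)"] m r by simp
      then show ?thesis using bb by simp
    qed
  qed
  show ?thesis using eq L by (auto intro: nth_equalityI)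
qed

lemma desc_split:
  assumes "(a, b) \<in> host_pairs l d" "e \<in> arcs_of (desc_path l a b)"
  shows "\<exists>g m i. (\<forall>j<l. j < m \<longrightarrow> g!j = a!j) \<and> (\<forall>j<l. m \<le> j \<longrightarrow> g!j = b!j) \<and>
     ((e = (Host g, Switch (Suc i) (remove_nth i g)) \<and> m = Suc i) \<or>
      (e = (Switch (Suc i) (remove_nth i g), Host g) \<and> m = i))"
proof -
  have L: "length a = l" "length b = l" using assms(1) unfolding host_pairs_def host_set_def by auto
  show ?thesis
    using assms(2) unfolding desc_path_def
    by (rule arc_split) (auto simp: L sorted_wrt_rev sorted_wrt_filter)
qed

lemma coloring_ok:
  assumes d: "d > 0" and p: "p \<in> host_pairs l d" and q: "q \<in> host_pairs l d" and pq: "p \<noteq> q"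
    and e: "e \<in> arcs_of ((\<lambda>(a, b). desc_path l a b) p)" "e \<in> arcs_of ((\<lambda>(a, b). desc_path l a b) q)"
  shows "(\<lambda>(a, b). wavelength d a b) p \<noteq> (\<lambda>(a, b). wavelength d a b) q"
proof
  obtain a b where ab: "p = (a, b)" by (cases p)
  obtain a' b' where ab': "q = (a', b')" by (cases q)
  assume w0: "(\<lambda>(a, b). wavelength d a b) p = (\<lambda>(a, b). wavelength d a b) q"
  then have w: "wavelength d a b = wavelength d a' b'" using ab ab' by simp
  have A: "a \<in> host_set l d" "b \<in> host_set l d" "a' \<in> host_set l d" "b' \<in> host_set l d"
    using p q ab ab' unfolding host_pairs_def by auto
  obtain g m i where g: "\<forall>j<l. j < m \<longrightarrow> g!j = a!j" "\<forall>j<l. m \<le> j \<longrightarrow> g!j = b!j"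
     "(e = (Host g, Switch (Suc i) (remove_nth i g)) \<and> m = Suc i) \<or>
      (e = (Switch (Suc i) (remove_nth i g), Host g) \<and> m = i)"
    using desc_split[of a b l d e] p e ab by auto
  obtain g' m' i' where g': "\<forall>j<l. j < m' \<longrightarrow> g'!j = a'!j" "\<forall>j<l. m' \<le> j \<longrightarrow> g'!j = b'!j"
     "(e = (Host g', Switch (Suc i') (remove_nth i' g')) \<and> m' = Suc i') \<or>
      (e = (Switch (Suc i') (remove_nth i' g'), Host g') \<and> m' = i')"
    using desc_split[of a' b' l d e] q e ab' by auto
  have "g' = g \<and> m' = m" using g(3) g'(3) by auto
  then have "a = a' \<and> b = b'" using det[OF A d w g(1,2)] g'(1,2) by simp
  then show False using pq ab ab' by simp
qed


lemma host_set_eq: "host_set l d = {xs. set xs \<subseteq> {..<d} \<and> length xs = l}"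
  by (auto simp: host_set_def)

lemma finite_host_set[simp]: "finite (host_set l d)"
  unfolding host_set_eq by (rule finite_lists_length_eq) simp

lemma card_host_set: "card (host_set l d) = d ^ l"
  unfolding host_set_eq by (subst card_lists_length_eq) simp_all

lemma finite_host_pairs[simp]: "finite (host_pairs l d)"
proof -
  have "host_pairs l d \<subseteq> host_set l d \<times> host_set l d" by (auto simp: host_pairs_def)
  then show ?thesis by (rule finite_subset) simp
qed

lemma wl_card:
  assumes d: "d > 0"
  shows "card ((\<lambda>(a, b). wavelength d a b) ` host_pairs l d) \<le> d ^ l - 1"
proof -
  let ?W = "{xs. set xs \<subseteq> {..<d} \<and> length xs = l}"
  have sub: "(\<lambda>(a, b). wavelength d a b) ` host_pairs l d \<subseteq> ?W - {replicate l 0}"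
  proof
    fix w assume "w \<in> (\<lambda>(a, b). wavelength d a b) ` host_pairs l d"
    then obtain a b where ab: "(a, b) \<in> host_pairs l d" and w: "w = wavelength d a b" by auto
    have A: "a \<in> host_set l d" "b \<in> host_set l d" "a \<noteq> b" using ab by (auto simp: host_pairs_def)
    have L: "length a = l" "length b = l" using A by (auto simp: host_set_def)
    have len: "length w = l" using L w by (simp add: wavelength_def)
    have ent: "set w \<subseteq> {..<d}"
    proof
      fix x assume "x \<in> set w"
      then obtain u v where "x = nat ((int v - int u) mod int d)" using w
        by (auto simp: wavelength_def)
      then show "x \<in> {..<d}" using d by (simp add: nat_less_iff)
    qed
    obtain j where j: "j < l" "a!j \<noteq> b!j" using A(3) L nth_equalityI by metis
    have "w ! j \<noteq> 0"
    proof
      assume "w ! j = 0"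
      then have "nat ((int (b!j) - int (a!j)) mod int d) = 0" using w j L by (simp add: wavelength_nth)
      then have "(int (b!j) - int (a!j)) mod int d = (int (b!j) - int (b!j)) mod int d"
        using d by (simp add: nat_eq_iff2) (smt (verit) pos_mod_sign of_nat_0_less_iff)
      then have "int (a!j) = int (b!j)"
        by (rule int_mod_eq[rotated 4]) (use host_entry A j in auto)
      then show False using j by simp
    qed
    moreover have "replicate l 0 ! j = (0::nat)" using j by simp
    ultimately have "w \<noteq> replicate l 0" by metis
    then show "w \<in> ?W - {replicate l 0}" using len ent by auto
  qed
  have fin: "finite ?W" by (rule finite_lists_length_eq) simp
  have "card (?W - {replicate l 0}) = d ^ l - 1"
    using card_lists_length_eq[of "{..<d}" l] d by (subst card_Diff_singleton) auto
  then show ?thesis using card_mono[OF _ sub] fin by simp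
qed

lemma remove_nth_0: "0 < k \<Longrightarrow> 0 < length z \<Longrightarrow> remove_nth k z ! 0 = z ! 0"
  by (simp add: remove_nth_def nth_append)

lemma arc_from_host: "is_arc l d (Host x, v) \<Longrightarrow>
   x \<in> host_set l d \<and> (\<exists>k. 1 \<le> k \<and> k \<le> l \<and> v = Switch k (remove_nth (k-1) x))"
  by (auto simp: is_arc_def)

lemma arc_from_switch: "is_arc l d (Switch k lab, v) \<Longrightarrow>
   \<exists>z. z \<in> host_set l d \<and> v = Host z \<and> lab = remove_nth (k-1) z \<and> 1 \<le> k \<and> k \<le> l"
  by (auto simp: is_arc_def)

lemma cut:
  assumes "\<forall>e\<in>arcs_of p. is_arc l d e" "p \<noteq> []" "hd p = Host x" "x!0 = 0"
    "last p = Host y" "y!0 \<noteq> 0" "l \<ge> 1"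
  shows "\<exists>h. h \<in> host_set l d \<and> h!0 = 0 \<and> (Host h, Switch 1 (remove_nth 0 h)) \<in> arcs_of p"
  using assms
proof (induction "length p" arbitrary: p x rule: less_induct)
  case less
  obtain rest where p: "p = Host x # rest" using less.prems(2,3) by (cases p) auto
  have "rest \<noteq> []" using p less.prems(4-6) by auto
  then obtain v rest2 where r: "rest = v # rest2" by (cases rest) auto
  have "is_arc l d (Host x, v)" using less.prems(1) p r by (simp add: arcs_of_Cons2)
  then obtain k where x: "x \<in> host_set l d" and k: "1 \<le> k" "k \<le> l" and v: "v = Switch k (remove_nth (k-1) x)"
    using arc_from_host by blast
  show ?case
  proof (cases "k = 1")
    case True
    then show ?thesis using x less.prems(4) p r v by (auto simp: arcs_of_Cons2)
  next
    case False
    have "rest2 \<noteq> []" using p r v less.prems(5) by auto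
    then obtain u rest3 where r2: "rest2 = u # rest3" by (cases rest2) auto
    have "is_arc l d (v, u)" using less.prems(1) p r r2 by (simp add: arcs_of_Cons2)
    then obtain z where z: "z \<in> host_set l d" "u = Host z" "remove_nth (k-1) x = remove_nth (k-1) z"
      using arc_from_switch v by blast
    have lx: "length x = l" "length z = l" using x z(1) by (auto simp: host_set_def)
    have "z!0 = x!0" using remove_nth_0[of "k-1" x] remove_nth_0[of "k-1" z] z(3) False k lx less.prems(7)
      by simp
    then have z0: "z!0 = 0" using less.prems(4) by simp
    have sub: "arcs_of rest2 \<subseteq> arcs_of p" using p r r2 by (auto simp: arcs_of_Cons2)
    have "\<exists>h. h \<in> host_set l d \<and> h!0 = 0 \<and> (Host h, Switch 1 (remove_nth 0 h)) \<in> arcs_of rest2"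
    proof (rule less.hyps)
      show "length rest2 < length p" using p r by simp
      show "\<forall>e\<in>arcs_of rest2. is_arc l d e" using sub less.prems(1) by auto
      show "rest2 \<noteq> []" using r2 by simp
      show "hd rest2 = Host z" using r2 z by simp
      show "z!0 = 0" by fact
      show "last rest2 = Host y" using less.prems(5) p r r2 by simp
    qed (use less.prems in auto)
    then show ?thesis using sub by blast
  qed
qed


lemma card_S:
  assumes "l \<ge> 1" "d > 0"
  shows "card {h \<in> host_set l d. h!0 = 0} = d ^ (l - 1)"
proof -
  have "{h \<in> host_set l d. h!0 = 0} = (Cons 0) ` host_set (l - 1) d"
  proof (intro set_eqI iffI)
    fix h assume h: "h \<in> {h \<in> host_set l d. h!0 = 0}"
    then have "length h = l" by (auto simp: host_set_def)
    with assms obtain y ys where "h = y # ys" by (cases h) auto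
    with h show "h \<in> (Cons 0) ` host_set (l - 1) d" by (auto simp: host_set_def)
  next
    fix h assume "h \<in> (Cons 0) ` host_set (l - 1) d"
    then show "h \<in> {h \<in> host_set l d. h!0 = 0}" using assms
      by (auto simp: host_set_def)
  qed
  then show ?thesis by (simp add: card_image card_host_set)
qed

lemma lower:
  assumes l: "l \<ge> 1" and d: "d \<ge> 2" and R: "is_routing l d R" and c: "proper_coloring l d R c"
  shows "d ^ l - d ^ (l - 1) \<le> card (c ` host_pairs l d)"
proof -
  define S where "S = {h \<in> host_set l d. h!0 = 0}"
  define T where "T = host_set l d - S"
  define P where "P h = {p \<in> host_pairs l d. (Host h, Switch 1 (remove_nth 0 h)) \<in> arcs_of (R p)}" for h
  have finS: "finite S" by (simp add: S_def)
  have cS: "card S = d ^ (l - 1)" using card_S[OF l] d by (simp add: S_def)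
  have "card T = card (host_set l d) - card S" unfolding T_def
    by (rule card_Diff_subset) (auto simp: S_def)
  then have cT: "card T = d ^ l - d ^ (l - 1)" using cS card_host_set by simp
  have rS: "replicate l 0 \<in> S" using l d by (auto simp: S_def host_set_def)
  have cover: "S \<times> T \<subseteq> (\<Union>h\<in>S. P h)"
  proof
    fix pr assume "pr \<in> S \<times> T"
    then obtain x y where pr: "pr = (x, y)" and x: "x \<in> host_set l d" "x!0 = 0"
      and y: "y \<in> host_set l d" "y!0 \<noteq> 0" by (auto simp: S_def T_def)
    then have hp: "(x, y) \<in> host_pairs l d" by (auto simp: host_pairs_def)
    then have "is_dipath l d (R (x, y)) (Host x) (Host y)" using R unfolding is_routing_def by auto
    then obtain h where "h \<in> host_set l d \<and> h!0 = 0 \<and> (Host h, Switch 1 (remove_nth 0 h)) \<in> arcs_of (R (x, y))"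
      using cut[of "R (x, y)" l d x y] x y l unfolding is_dipath_def by blast
    then show "pr \<in> (\<Union>h\<in>S. P h)" using hp pr by (auto simp: S_def P_def)
  qed
  have "card S * card T = card (S \<times> T)" by (simp add: card_cartesian_product)
  also have "\<dots> \<le> card (\<Union>h\<in>S. P h)"
    by (rule card_mono[OF _ cover]) (auto simp: P_def finS intro: finite_subset[OF _ finite_host_pairs])
  also have "\<dots> \<le> (\<Sum>h\<in>S. card (P h))" by (rule card_UN_le[OF finS])
  finally have ineq: "card S * card T \<le> (\<Sum>h\<in>S. card (P h))" .
  have "\<exists>h\<in>S. card T \<le> card (P h)"
  proof (rule ccontr)
    assume "\<not> ?thesis"
    then have "\<forall>h\<in>S. card (P h) < card T" by auto
    then have "(\<Sum>h\<in>S. card (P h)) < (\<Sum>h\<in>S. card T)"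
      using finS rS by (intro sum_strict_mono) auto
    then show False using ineq by simp
  qed
  then obtain h where h: "h \<in> S" "card T \<le> card (P h)" by blast
  have inj: "inj_on c (P h)"
  proof (rule inj_onI)
    fix p q assume pq: "p \<in> P h" "q \<in> P h" "c p = c q"
    show "p = q"
    proof (rule ccontr)
      assume "p \<noteq> q"
      moreover have "arcs_of (R p) \<inter> arcs_of (R q) \<noteq> {}" using pq by (auto simp: P_def)
      ultimately have "c p \<noteq> c q" using c pq unfolding proper_coloring_def P_def by auto
      then show False using pq by simp
    qed
  qed
  have "card (P h) = card (c ` P h)" using card_image[OF inj] by simp
  also have "\<dots> \<le> card (c ` host_pairs l d)"
    by (rule card_mono) (auto simp: P_def)
  finally show ?thesis using h cT by simp
qed

lemma omega_lower:
  assumes l: "l \<ge> 1" and d: "d \<ge> 2" and R: "is_routing l d R"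
  shows "d ^ l - d ^ (l - 1) \<le> omega_R l d R"
  unfolding omega_R_def
proof (rule LeastI2_ex)
  have "proper_coloring l d R to_nat" unfolding proper_coloring_def by auto
  then show "\<exists>k. \<exists>c :: nat list \<times> nat list \<Rightarrow> nat. proper_coloring l d R c \<and> card (c ` host_pairs l d) = k"
    by blast
next
  fix k assume "\<exists>c :: nat list \<times> nat list \<Rightarrow> nat. proper_coloring l d R c \<and> card (c ` host_pairs l d) = k"
  then show "d ^ l - d ^ (l - 1) \<le> k" using lower[OF l d R] by blast
qed

theorem mainTheorem5:
  fixes l d :: nat
  assumes "l \<ge> 1" and "d \<ge> 2"
  shows "is_routing l d (\<lambda>(a, b). desc_path l a b)
    \<and> proper_coloring l d (\<lambda>(a, b). desc_path l a b) (\<lambda>(a, b). wavelength d a b)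
    \<and> card ((\<lambda>(a, b). wavelength d a b) ` host_pairs l d) \<le> d ^ l - 1
    \<and> d ^ l - d ^ (l - 1) \<le> optical_index l d
    \<and> optical_index l d \<le> d ^ l - 1"
proof -
  let ?R = "\<lambda>(a, b). desc_path l a b"
  let ?w = "\<lambda>(a, b). wavelength d a b"
  have d0: "d > 0" using assms by simp
  have rout: "is_routing l d ?R" unfolding is_routing_def using routing_ok by auto
  have prp: "proper_coloring l d ?R ?w" unfolding proper_coloring_def
    using coloring_ok[OF d0] by blast
  have cw: "card (?w ` host_pairs l d) \<le> d ^ l - 1" using wl_card[OF d0] .
  have low: "d ^ l - d ^ (l - 1) \<le> optical_index l d"
    unfolding optical_index_def
  proof (rule LeastI2_ex)
    show "\<exists>k R. is_routing l d R \<and> omega_R l d R = k" using rout by blast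
  next
    fix k assume "\<exists>R. is_routing l d R \<and> omega_R l d R = k"
    then show "d ^ l - d ^ (l - 1) \<le> k" using omega_lower[OF assms] by blast
  qed
  let ?c = "\<lambda>p. to_nat (?w p)"
  have prop2: "proper_coloring l d ?R ?c" using prp unfolding proper_coloring_def
    by (metis to_nat_split)
  have "card (?c ` host_pairs l d) = card (?w ` host_pairs l d)"
  proof -
    have "?c ` host_pairs l d = to_nat ` (?w ` host_pairs l d)" by (simp add: image_image)
    then show ?thesis by (simp add: card_image)
  qed
  then have "omega_R l d ?R \<le> card (?w ` host_pairs l d)"
    unfolding omega_R_def using prop2 by (intro Least_le) metis
  moreover have "optical_index l d \<le> omega_R l d ?R"
    unfolding optical_index_def using rout by (intro Least_le) blast
  ultimately have up: "optical_index l d \<le> d ^ l - 1" using cw by simp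
  show ?thesis using rout prp cw low up by blast
qed

end
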